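(* Consider the independent block-fading binary symmetric wiretap channel with parameters $q_1,q_1^*\in[0,1]$, $q_2=1-q_1$, $q_2^*=1-q_1^*$, and crossover probabilities satisfying $p_1\le p_2\le p_1^*\le p_2^*\le 0.5$. Its secrecy capacity with channel state information available only at the decoders satisfies $$C^s_{\textrm{CSI-D}}\le q_1^*H(p_1^* )+q_2^*H(p_2^* )-q_1H(p_1)-q_2H(p_2).$$
   Context: $H(p)=-p\log_2 p-(1-p)\log_2(1-p)$ is the binary entropy function, and BSC$(p)$ denotes the binary symmetric channel with crossover probability $p$. Independent block-fading binary symmetric wiretap channel: the transmitter sends $NB$ binary symbols $X_{1:NB}$ organized in $B$ fading blocks of length $N$. Each block $k$ has a main-channel state $S_k\in\{1,2\}$ with $\Pr(S_k=1)=q_1$ and an eavesdropper-channel state $S^*_k\in\{1,2\}$ with $\Pr(S_k^*=1)=q_1^*$; all these states are mutually independent (across blocks and between the two channels) and constant within a block. Within block $k$, the legitimate receiver observes the output $Y$ of $N$ independent uses of BSC$(p_{S_k})$, and the eavesdropper observes the output $Z$ of $N$ independent uses of BSC$(p^*_{S^*_k})$. Let $\mathsf{S}$ denote all the state realizations $(S_k,S_k^* )_{k=1}^B$. A code consists of a (possibly randomized) encoder $X_{1:NB}=f(\mathsf{M})$ of a uniformly distributed message $\mathsf{M}$, which knows only the state distributions (not the realizations), and a decoder $\hat{\mathsf{M}}=g(Y_{1:NB},\mathsf{S})$; its rate is $\frac{1}{NB}\log_2$ of the message-set size. A rate $R$ is achievable if there are such codes of rate at least $R$ (asymptotically) with $N,B\to\infty$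 such that $\Pr\{\mathsf{M}\ne\hat{\mathsf{M}}\}\to0$ and $\frac{1}{NB}I(\mathsf{M};Z_{1:NB}\mid\mathsf{S})\to 0$. $C^s_{\textrm{CSI-D}}$ is the supremum of achievable rates. *)

theory Defs
  imports Complex_Main "HOL-Library.Extended_Real"
begin

definition Hb :: "real \<Rightarrow> real" where
  "Hb p = (if p = 0 \<or> p = 1 then 0 else - p * log 2 p - (1 - p) * log 2 (1 - p))"

definition words :: "nat \<Rightarrow> bool list set" where
  "words n = {xs. length xs = n}"

text \<open>State realizations: one pair (S_k, S^*_k) per block; True encodes state 1,
  False encodes state 2.\<close>
definition states :: "nat \<Rightarrow> (bool \<times> bool) list set" where
  "states B = {ss. length ss = B}"

definition state_prob :: "real \<Rightarrow> real \<Rightarrow> (bool \<times> bool) list \<Rightarrow> real" where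
  "state_prob q1 q1s ss =
     (\<Prod>k<length ss. (if fst (ss ! k) then q1 else 1 - q1) * (if snd (ss ! k) then q1s else 1 - q1s))"

text \<open>Block-fading BSC: symbol i lies in block i div N; the crossover probability
  of that block is pa if the block state is 1 (True), pb otherwise.\<close>
definition bf_bsc :: "nat \<Rightarrow> real \<Rightarrow> real \<Rightarrow> bool list \<Rightarrow> bool list \<Rightarrow> bool list \<Rightarrow> real" where
  "bf_bsc N pa pb st x y =
     (\<Prod>i<length x. let p = (if st ! (i div N) then pa else pb) in
        (if x ! i = y ! i then 1 - p else p))"

text \<open>A code of block length N, B blocks: K messages {0..<K}, randomized encoder
  enc m x = Pr(X = x | M = m) (independent of the state realizations),
  decoder dec ss y using all state realizations.\<close>
definition valid_code :: "nat \<Rightarrow> nat \<Rightarrow> nat \<Rightarrow> (nat \<Rightarrow> bool list \<Rightarrow> real) \<Rightarrow> bool" where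
  "valid_code N B K enc \<longleftrightarrow> K \<ge> 1 \<and>
     (\<forall>m<K. (\<forall>x\<in>words (N*B). enc m x \<ge> 0) \<and> (\<Sum>x\<in>words (N*B). enc m x) = 1)"

definition err_prob ::
  "real \<Rightarrow> real \<Rightarrow> real \<Rightarrow> real \<Rightarrow> nat \<Rightarrow> nat \<Rightarrow> nat \<Rightarrow> (nat \<Rightarrow> bool list \<Rightarrow> real)
   \<Rightarrow> ((bool \<times> bool) list \<Rightarrow> bool list \<Rightarrow> nat) \<Rightarrow> real" where
  "err_prob q1 q1s p1 p2 N B K enc dec =
     (\<Sum>m<K. \<Sum>ss\<in>states B. \<Sum>x\<in>words (N*B). \<Sum>y\<in>words (N*B).
        (1 / real K) * state_prob q1 q1s ss * enc m x * bf_bsc N p1 p2 (map fst ss) x y *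
        (if dec ss y \<noteq> m then 1 else 0))"

definition eve_out ::
  "real \<Rightarrow> real \<Rightarrow> nat \<Rightarrow> nat \<Rightarrow> (nat \<Rightarrow> bool list \<Rightarrow> real) \<Rightarrow> (bool \<times> bool) list
   \<Rightarrow> nat \<Rightarrow> bool list \<Rightarrow> real" where
  "eve_out p1s p2s N B enc ss m z =
     (\<Sum>x\<in>words (N*B). enc m x * bf_bsc N p1s p2s (map snd ss) x z)"

definition xlog :: "real \<Rightarrow> real \<Rightarrow> real" where
  "xlog a b = (if a = 0 then 0 else a * log 2 (a / b))"

text \<open>I(M; Z | S) in bits, with M uniform on {0..<K}.\<close>
definition leakage ::
  "real \<Rightarrow> real \<Rightarrow> real \<Rightarrow> real \<Rightarrow> nat \<Rightarrow> nat \<Rightarrow> nat \<Rightarrow> (nat \<Rightarrow> bool list \<Rightarrow> real) \<Rightarrow> real" where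
  "leakage q1 q1s p1s p2s N B K enc =
     (\<Sum>ss\<in>states B. state_prob q1 q1s ss *
        (\<Sum>m<K. \<Sum>z\<in>words (N*B).
           (1 / real K) * xlog (eve_out p1s p2s N B enc ss m z)
              ((\<Sum>m'<K. eve_out p1s p2s N B enc ss m' z) / real K)))"

definition achievable_CSI_D ::
  "real \<Rightarrow> real \<Rightarrow> real \<Rightarrow> real \<Rightarrow> real \<Rightarrow> real \<Rightarrow> real \<Rightarrow> bool" where
  "achievable_CSI_D q1 q1s p1 p2 p1s p2s R \<longleftrightarrow>
     (\<exists>(N :: nat \<Rightarrow> nat) (B :: nat \<Rightarrow> nat) (K :: nat \<Rightarrow> nat)
        (enc :: nat \<Rightarrow> nat \<Rightarrow> bool list \<Rightarrow> real)
        (dec :: nat \<Rightarrow> (bool \<times> bool) list \<Rightarrow> bool list \<Rightarrow> nat).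
        filterlim N at_top sequentially \<and> filterlim B at_top sequentially \<and>
        (\<forall>n. valid_code (N n) (B n) (K n) (enc n)) \<and>
        (\<forall>\<epsilon>>0. eventually (\<lambda>n. log 2 (real (K n)) / real (N n * B n) \<ge> R - \<epsilon>) sequentially) \<and>
        (\<lambda>n. err_prob q1 q1s p1 p2 (N n) (B n) (K n) (enc n) (dec n)) \<longlonglongrightarrow> 0 \<and>
        (\<lambda>n. leakage q1 q1s p1s p2s (N n) (B n) (K n) (enc n) / real (N n * B n)) \<longlonglongrightarrow> 0)"

definition secrecy_capacity_CSI_D ::
  "real \<Rightarrow> real \<Rightarrow> real \<Rightarrow> real \<Rightarrow> real \<Rightarrow> real \<Rightarrow> ereal" where
  "secrecy_capacity_CSI_D q1 q1s p1 p2 p1s p2s =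
     (SUP R\<in>{R. achievable_CSI_D q1 q1s p1 p2 p1s p2s R}. ereal R)"

end

theory Submission
  imports Defs
begin

lemma finite_len: "finite {xs::'a::finite list. length xs = n}"
  using finite_lists_length_eq[of "UNIV::'a set" n] by simp

lemma len_Suc_image: "{xs::'a list. length xs = Suc n} = (\<lambda>(a,xs). a#xs) ` (UNIV \<times> {xs. length xs = n})"
  by (auto simp: image_iff length_Suc_conv)

lemma sum_len_Suc:
  "(\<Sum>xs\<in>{xs::'a::finite list. length xs = Suc n}. g xs) = (\<Sum>a\<in>UNIV. \<Sum>xs\<in>{xs. length xs = n}. g (a#xs))"
proof -
  have inj: "inj_on (\<lambda>(a,xs). a#xs) (UNIV \<times> {xs::'a list. length xs = n})"
    by (auto simp: inj_on_def)
  have "(\<Sum>xs\<in>{xs::'a list. length xs = Suc n}. g xs) = (\<Sum>p\<in>UNIV \<times> {xs::'a list. length xs = n}. g ((\<lambda>(a,xs). a#xs) p))"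
    unfolding len_Suc_image by (rule sum.reindex[OF inj, unfolded comp_def])
  also have "\<dots> = (\<Sum>a\<in>UNIV. \<Sum>xs\<in>{xs. length xs = n}. g (a#xs))"
    by (simp add: sum.cartesian_product split_def)
  finally show ?thesis .
qed

definition pbsc :: "(nat \<Rightarrow> real) \<Rightarrow> bool list \<Rightarrow> bool list \<Rightarrow> real" where
  "pbsc c x y = (\<Prod>i<length x. if x!i = y!i then 1 - c i else c i)"

lemma pbsc_Cons: "pbsc c (u#x) (v#y) = (if u = v then 1 - c 0 else c 0) * pbsc (\<lambda>i. c (Suc i)) x y"
  unfolding pbsc_def by (simp only: length_Cons prod.lessThan_Suc_shift nth_Cons_0 nth_Cons_Suc list.inject)

lemma pbsc_nonneg: "(\<And>i. 0 \<le> c i \<and> c i \<le> 1) \<Longrightarrow> 0 \<le> pbsc c x y"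
  unfolding pbsc_def by (rule prod_nonneg) (auto)

lemma pbsc_sym: "length x = length y \<Longrightarrow> pbsc c x y = pbsc c y x"
  unfolding pbsc_def by (intro prod.cong) auto

lemma words_eq: "words n = {xs. length xs = n}" by (simp add: words_def)

lemma sum_bool: "(\<Sum>b\<in>(UNIV::bool set). f b) = f True + f False"
  by (simp add: UNIV_bool add.commute)

lemma pbsc_sum1: "length x = n \<Longrightarrow> (\<Sum>y\<in>words n. pbsc c x y) = 1"
proof (induction n arbitrary: x c)
  case 0 then show ?case by (simp add: words_eq pbsc_def)
next
  case (Suc n)
  then obtain u x' where x: "x = u#x'" "length x' = n" by (auto simp: length_Suc_conv)
  have "(\<Sum>y\<in>words (Suc n). pbsc c x y) =
     (\<Sum>v\<in>UNIV. (if u = v then 1 - c 0 else c 0) * (\<Sum>y\<in>words n. pbsc (\<lambda>i. c (Suc i)) x' y))"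
    unfolding words_eq sum_len_Suc x pbsc_Cons by (simp add: sum_distrib_left)
  also have "\<dots> = 1" using Suc.IH[OF x(2)] by (simp add: sum_bool words_eq)
  finally show ?case .
qed

lemma pbsc_comp: "length x = n \<Longrightarrow> length z = n \<Longrightarrow>
  (\<Sum>y\<in>words n. pbsc a x y * pbsc c y z) = pbsc (\<lambda>i. a i * (1 - c i) + (1 - a i) * c i) x z"
proof (induction n arbitrary: x z a c)
  case 0 then show ?case by (simp add: words_eq pbsc_def)
next
  case (Suc n)
  then obtain u x' where x: "x = u#x'" "length x' = n" by (auto simp: length_Suc_conv)
  from Suc obtain w z' where z: "z = w#z'" "length z' = n" by (auto simp: length_Suc_conv)
  have "(\<Sum>y\<in>words (Suc n). pbsc a x y * pbsc c y z) =
     (\<Sum>v\<in>UNIV. ((if u = v then 1 - a 0 else a 0) * (if v = w then 1 - c 0 else c 0)) *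
        (\<Sum>y\<in>words n. pbsc (\<lambda>i. a (Suc i)) x' y * pbsc (\<lambda>i. c (Suc i)) y z'))"
    unfolding words_eq sum_len_Suc x z pbsc_Cons by (simp add: sum_distrib_left mult_ac)
  also have "\<dots> = pbsc (\<lambda>i. a i * (1 - c i) + (1 - a i) * c i) x z"
    unfolding Suc.IH[OF x(2) z(2)] x z pbsc_Cons
    by (simp add: sum_bool algebra_simps)
  finally show ?case .
qed

lemma Hb_alt: "Hb p = - p * log 2 p - (1 - p) * log 2 (1 - p)"
  by (auto simp: Hb_def)

lemma xylog: "0 \<le> x \<Longrightarrow> 0 \<le> y \<Longrightarrow> x*y*log 2 (x*y) = x*y*log 2 x + x*y*log 2 y"
  by (cases "x = 0 \<or> y = 0") (auto simp: log_mult algebra_simps)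

lemma pbsc_ent: "length x = n \<Longrightarrow> (\<And>i. 0 \<le> a i \<and> a i \<le> 1) \<Longrightarrow>
  (\<Sum>y\<in>words n. pbsc a x y * log 2 (pbsc a x y)) = - (\<Sum>i<n. Hb (a i))"
proof (induction n arbitrary: x a)
  case 0 then show ?case by (simp add: words_eq pbsc_def)
next
  case (Suc n)
  then obtain u x' where x: "x = u#x'" "length x' = n" by (auto simp: length_Suc_conv)
  define f where "f v = (if u = v then 1 - a 0 else a 0)" for v
  define g where "g y = pbsc (\<lambda>i. a (Suc i)) x' y" for y
  have f0: "0 \<le> f v" for v using Suc.prems(2)[of 0] by (simp add: f_def)
  have g0: "0 \<le> g y" for y unfolding g_def by (rule pbsc_nonneg) (use Suc.prems(2) in auto)
  have gs: "(\<Sum>y\<in>words n. g y) = 1" unfolding g_def by (rule pbsc_sum1[OF x(2)])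
  have gl: "(\<Sum>y\<in>words n. g y * log 2 (g y)) = - (\<Sum>i<n. Hb (a (Suc i)))"
    unfolding g_def by (rule Suc.IH[OF x(2)]) (use Suc.prems(2) in auto)
  have "(\<Sum>y\<in>words (Suc n). pbsc a x y * log 2 (pbsc a x y)) =
     (\<Sum>v\<in>UNIV. \<Sum>y\<in>words n. f v * g y * log 2 (f v * g y))"
    unfolding words_eq sum_len_Suc x pbsc_Cons f_def g_def by simp
  also have "\<dots> = (\<Sum>v\<in>UNIV. \<Sum>y\<in>words n. f v * log 2 (f v) * g y + f v * (g y * log 2 (g y)))"
    by (intro sum.cong refl) (simp add: xylog[OF f0 g0] distrib_left mult.assoc[symmetric])
  also have "\<dots> = (\<Sum>v\<in>UNIV. f v * log 2 (f v) * (\<Sum>y\<in>words n. g y) + f v * (\<Sum>y\<in>words n. g y * log 2 (g y)))"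
    by (simp add: sum.distrib sum_distrib_left)
  also have "\<dots> = - (\<Sum>i<Suc n. Hb (a i))"
    unfolding gs gl sum.lessThan_Suc_shift Hb_alt[of "a 0"] by (simp add: sum_bool f_def algebra_simps)
  finally show ?case .
qed



definition ent :: "'a set \<Rightarrow> ('a \<Rightarrow> real) \<Rightarrow> real" where
  "ent A f = - (\<Sum>a\<in>A. f a * log 2 (f a))"

lemma gibbs_term:
  assumes "0 \<le> p" "0 \<le> q" "p > 0 \<longrightarrow> q > 0"
  shows "(p - q) / ln 2 \<le> p * log 2 (p / q)"
proof (cases "p = 0")
  case True then show ?thesis using assms by (simp add: divide_nonpos_pos)
next
  case False
  then have p: "p > 0" and q: "q > 0" using assms by auto
  have "ln (q/p) \<le> q/p - 1" by (rule ln_le_minus_one) (use p q in simp)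
  then have "p * ln (q/p) \<le> q - p" using p by (simp add: field_simps mult_left_mono)
  moreover have "ln (p/q) = - ln (q/p)" using p q by (simp add: ln_div)
  ultimately have "p - q \<le> p * ln (p/q)" by simp
  then have "(p - q) / ln 2 \<le> (p * ln (p/q)) / ln 2" by (rule divide_right_mono) simp
  then show ?thesis by (simp add: log_def)
qed

lemma sum_member_le: fixes f :: "'a \<Rightarrow> real" shows "finite A \<Longrightarrow> a \<in> A \<Longrightarrow> (\<forall>b\<in>A. 0 \<le> f b) \<Longrightarrow> f a \<le> sum f A"
  by (rule member_le_sum) (auto)

lemma plogpq:
  assumes "p > 0" "a > 0" "b > 0" "p / q = a / b"
  shows "p * log 2 (p / q) = p * log 2 a - p * log 2 b"
  using assms by (simp add: log_divide right_diff_distrib)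

lemma ent_degrade:
  fixes PY :: "'y \<Rightarrow> real" and C :: "'y \<Rightarrow> 'y \<Rightarrow> real"
  assumes fin: "finite Ys"
    and PY0: "\<forall>y\<in>Ys. 0 \<le> PY y"
    and C0: "\<forall>y\<in>Ys. \<forall>z\<in>Ys. 0 \<le> C y z"
    and Crow: "\<forall>y\<in>Ys. (\<Sum>z\<in>Ys. C y z) = 1"
    and Ccol: "\<forall>z\<in>Ys. (\<Sum>y\<in>Ys. C y z) = 1"
    and PZ: "\<forall>z\<in>Ys. PZ z = (\<Sum>y\<in>Ys. PY y * C y z)"
  shows "ent Ys PY \<le> ent Ys PZ"
proof -
  define p where "p y z = PY y * C y z" for y z
  define q where "q y z = PZ z * C y z" for y z
  have PZ0: "0 \<le> PZ z" if "z \<in> Ys" for z using PZ PY0 C0 that by (auto intro!: sum_nonneg)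
  have sq: "(\<Sum>y\<in>Ys. \<Sum>z\<in>Ys. q y z) = (\<Sum>y\<in>Ys. \<Sum>z\<in>Ys. p y z)"
  proof -
    have "(\<Sum>y\<in>Ys. \<Sum>z\<in>Ys. q y z) = (\<Sum>z\<in>Ys. PZ z * (\<Sum>y\<in>Ys. C y z))"
      unfolding q_def by (subst sum.swap) (simp add: sum_distrib_left)
    also have "\<dots> = (\<Sum>z\<in>Ys. \<Sum>y\<in>Ys. PY y * C y z)" using Ccol PZ by simp
    also have "\<dots> = (\<Sum>y\<in>Ys. \<Sum>z\<in>Ys. p y z)" unfolding p_def by (rule sum.swap)
    finally show ?thesis .
  qed
  have tm: "(p y z - q y z) / ln 2 \<le> p y z * log 2 (PY y) - p y z * log 2 (PZ z)"
    if y: "y \<in> Ys" and z: "z \<in> Ys" for y z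
  proof (cases "p y z = 0")
    case True
    then show ?thesis using PZ0[OF z] C0 y z by (simp add: q_def divide_nonpos_pos)
  next
    case False
    then have pp: "p y z > 0" using PY0 C0 y z by (simp add: p_def less_le)
    then have Cp: "C y z > 0" and PYp: "PY y > 0" using PY0 C0 y z
      by (auto simp: p_def zero_less_mult_iff less_le)
    have "p y z \<le> PZ z" unfolding PZ[rule_format, OF z] p_def
      by (rule sum_member_le[OF fin y]) (use PY0 C0 z in auto)
    then have PZp: "PZ z > 0" using pp by linarith
    have "(p y z - q y z) / ln 2 \<le> p y z * log 2 (p y z / q y z)"
      by (rule gibbs_term) (use pp PZp Cp in \<open>auto simp: q_def\<close>)
    also have "\<dots> = p y z * log 2 (PY y) - p y z * log 2 (PZ z)"
      by (rule plogpq[OF pp PYp PZp]) (use Cp in \<open>simp add: p_def q_def\<close>)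
    finally show ?thesis .
  qed
  have "0 \<le> (\<Sum>y\<in>Ys. \<Sum>z\<in>Ys. (p y z - q y z) / ln 2)"
    using sq by (simp add: sum_divide_distrib[symmetric] sum_subtractf)
  also have "\<dots> \<le> (\<Sum>y\<in>Ys. \<Sum>z\<in>Ys. p y z * log 2 (PY y) - p y z * log 2 (PZ z))"
    by (intro sum_mono tm)
  also have "\<dots> = (\<Sum>y\<in>Ys. PY y * log 2 (PY y)) - (\<Sum>z\<in>Ys. PZ z * log 2 (PZ z))"
  proof -
    have a: "(\<Sum>y\<in>Ys. \<Sum>z\<in>Ys. p y z * log 2 (PY y)) = (\<Sum>y\<in>Ys. PY y * log 2 (PY y))"
      unfolding p_def using Crow
      by (intro sum.cong refl) (simp add: sum_distrib_right[symmetric] sum_distrib_left[symmetric] mult_ac)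
    have b: "(\<Sum>y\<in>Ys. \<Sum>z\<in>Ys. p y z * log 2 (PZ z)) = (\<Sum>z\<in>Ys. PZ z * log 2 (PZ z))"
      unfolding p_def using PZ
      by (subst sum.swap) (intro sum.cong refl, simp add: sum_distrib_right)
    show ?thesis by (simp add: sum_subtractf a b)
  qed
  finally show ?thesis unfolding ent_def by simp
qed



lemma plogpq4:
  assumes "p > 0" "a > 0" "b > 0" "c > 0" "d > 0" "p / q = (a*b) / (c*d)"
  shows "p * log 2 (p / q) = p * log 2 a + p * log 2 b - p * log 2 c - p * log 2 d"
  using assms by (simp add: log_divide log_mult algebra_simps)

lemma ent_dpi:
  fixes \<pi> :: "'x \<Rightarrow> real" and W :: "'x \<Rightarrow> 'y \<Rightarrow> real" and C :: "'y \<Rightarrow> 'y \<Rightarrow> real"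
  assumes finX: "finite Xs" and finY: "finite Ys"
    and pi0: "\<forall>x\<in>Xs. 0 \<le> \<pi> x" and pi1: "(\<Sum>x\<in>Xs. \<pi> x) = 1"
    and W0: "\<forall>x\<in>Xs. \<forall>y\<in>Ys. 0 \<le> W x y" and W1: "\<forall>x\<in>Xs. (\<Sum>y\<in>Ys. W x y) = 1"
    and C0: "\<forall>y\<in>Ys. \<forall>z\<in>Ys. 0 \<le> C y z" and C1: "\<forall>y\<in>Ys. (\<Sum>z\<in>Ys. C y z) = 1"
    and V: "\<forall>x\<in>Xs. \<forall>z\<in>Ys. V x z = (\<Sum>y\<in>Ys. W x y * C y z)"
    and hW: "\<forall>x\<in>Xs. (\<Sum>y\<in>Ys. W x y * log 2 (W x y)) = - hW"
    and hV: "\<forall>x\<in>Xs. (\<Sum>z\<in>Ys. V x z * log 2 (V x z)) = - hV"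
    and PY: "\<forall>y\<in>Ys. PY y = (\<Sum>x\<in>Xs. \<pi> x * W x y)"
    and PZ: "\<forall>z\<in>Ys. PZ z = (\<Sum>x\<in>Xs. \<pi> x * V x z)"
  shows "ent Ys PZ - ent Ys PY \<le> hV - hW"
proof -
  define p where "p x y z = \<pi> x * W x y * C y z" for x y z
  define q where "q x y z = \<pi> x * V x z * PY y * C y z / PZ z" for x y z
  have V0: "0 \<le> V x z" if "x \<in> Xs" "z \<in> Ys" for x z
    using V W0 C0 that by (auto intro!: sum_nonneg)
  have PY0: "0 \<le> PY y" if "y \<in> Ys" for y using PY pi0 W0 that by (auto intro!: sum_nonneg)
  have PZ0: "0 \<le> PZ z" if "z \<in> Ys" for z using PZ pi0 V0 that by (auto intro!: sum_nonneg)
  have pyz: "(\<Sum>y\<in>Ys. p x y z) = \<pi> x * V x z" if "x \<in> Xs" "z \<in> Ys" for x z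
    unfolding p_def V[rule_format, OF that] by (simp add: sum_distrib_left mult_ac)
  have PZ': "PZ z = (\<Sum>y\<in>Ys. PY y * C y z)" if "z \<in> Ys" for z
  proof -
    have "PZ z = (\<Sum>x\<in>Xs. \<Sum>y\<in>Ys. p x y z)" using PZ that pyz by simp
    also have "\<dots> = (\<Sum>y\<in>Ys. PY y * C y z)" unfolding p_def
      by (subst sum.swap) (simp add: PY sum_distrib_right)
    finally show ?thesis .
  qed
  have Vrow: "(\<Sum>z\<in>Ys. V x z) = 1" if "x \<in> Xs" for x
  proof -
    have "(\<Sum>z\<in>Ys. V x z) = (\<Sum>y\<in>Ys. W x y * (\<Sum>z\<in>Ys. C y z))"
      using V that by (simp add: sum_distrib_left) (rule sum.swap)
    also have "\<dots> = 1" using C1 W1 that by simp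
    finally show ?thesis .
  qed
  have sp: "(\<Sum>x\<in>Xs. \<Sum>y\<in>Ys. \<Sum>z\<in>Ys. p x y z) = 1"
  proof -
    have "(\<Sum>x\<in>Xs. \<Sum>y\<in>Ys. \<Sum>z\<in>Ys. p x y z) = (\<Sum>x\<in>Xs. \<pi> x * (\<Sum>y\<in>Ys. W x y * (\<Sum>z\<in>Ys. C y z)))"
      unfolding p_def by (simp add: sum_distrib_left mult_ac)
    also have "\<dots> = 1" using C1 W1 pi1 by simp
    finally show ?thesis .
  qed
  have sq: "(\<Sum>x\<in>Xs. \<Sum>y\<in>Ys. \<Sum>z\<in>Ys. q x y z) \<le> 1"
  proof -
    have "(\<Sum>y\<in>Ys. q x y z) \<le> \<pi> x * V x z" if x: "x \<in> Xs" and z: "z \<in> Ys" for x z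
    proof -
      have "(\<Sum>y\<in>Ys. q x y z) = \<pi> x * V x z * (\<Sum>y\<in>Ys. PY y * C y z) / PZ z"
        unfolding q_def by (simp add: sum_distrib_left sum_divide_distrib mult_ac)
      also have "\<dots> = \<pi> x * V x z * (PZ z / PZ z)" using PZ'[OF z] by simp
      also have "\<dots> \<le> \<pi> x * V x z"
        using pi0 V0[OF x z] x by (cases "PZ z = 0") auto
      finally show ?thesis .
    qed
    then have "(\<Sum>x\<in>Xs. \<Sum>z\<in>Ys. \<Sum>y\<in>Ys. q x y z) \<le> (\<Sum>x\<in>Xs. \<Sum>z\<in>Ys. \<pi> x * V x z)"
      by (intro sum_mono) simp
    moreover have "(\<Sum>x\<in>Xs. \<Sum>z\<in>Ys. \<Sum>y\<in>Ys. q x y z) = (\<Sum>x\<in>Xs. \<Sum>y\<in>Ys. \<Sum>z\<in>Ys. q x y z)"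
      by (rule sum.cong[OF refl], rule sum.swap)
    ultimately have "(\<Sum>x\<in>Xs. \<Sum>y\<in>Ys. \<Sum>z\<in>Ys. q x y z) \<le> (\<Sum>x\<in>Xs. \<Sum>z\<in>Ys. \<pi> x * V x z)" by simp
    also have "\<dots> = 1" using Vrow pi1 by (simp add: sum_distrib_left[symmetric])
    finally show ?thesis .
  qed
  have tm: "(p x y z - q x y z) / ln 2 \<le>
      p x y z * log 2 (W x y) + p x y z * log 2 (PZ z) - p x y z * log 2 (V x z) - p x y z * log 2 (PY y)"
    if x: "x \<in> Xs" and y: "y \<in> Ys" and z: "z \<in> Ys" for x y z
  proof (cases "p x y z = 0")
    case True
    then show ?thesis using PZ0[OF z] PY0[OF y] V0[OF x z] C0 pi0 x y z
      by (simp add: q_def divide_nonpos_pos)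
  next
    case False
    have p0: "0 \<le> p x y z" using pi0 W0 C0 x y z by (simp add: p_def)
    then have pp: "p x y z > 0" using False by simp
    then have pip: "\<pi> x > 0" and Wp: "W x y > 0" and Cp: "C y z > 0" using pi0 W0 C0 x y z
      by (auto simp: p_def zero_less_mult_iff less_le)
    have "W x y * C y z \<le> V x z" unfolding V[rule_format, OF x z]
      by (rule sum_member_le[OF finY y]) (use W0 C0 x z in auto)
    then have Vp: "V x z > 0" using Wp Cp by (smt (verit) mult_pos_pos)
    have "\<pi> x * W x y \<le> PY y" unfolding PY[rule_format, OF y]
      by (rule sum_member_le[OF finX x]) (use W0 pi0 y in auto)
    then have PYp: "PY y > 0" using Wp pip by (smt (verit) mult_pos_pos)
    have "\<pi> x * V x z \<le> PZ z" unfolding PZ[rule_format, OF z]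
      by (rule sum_member_le[OF finX x]) (use V0 pi0 z in auto)
    then have PZp: "PZ z > 0" using Vp pip by (smt (verit) mult_pos_pos)
    have "(p x y z - q x y z) / ln 2 \<le> p x y z * log 2 (p x y z / q x y z)"
      by (rule gibbs_term) (use p0 pip Vp PYp Cp PZp in \<open>auto simp: q_def\<close>)
    also have "\<dots> = p x y z * log 2 (W x y) + p x y z * log 2 (PZ z) - p x y z * log 2 (V x z) - p x y z * log 2 (PY y)"
      by (rule plogpq4[OF pp Wp PZp Vp PYp]) (use pip Vp PYp Cp PZp in \<open>simp add: p_def q_def field_simps\<close>)
    finally show ?thesis .
  qed
  have A: "(\<Sum>x\<in>Xs. \<Sum>y\<in>Ys. \<Sum>z\<in>Ys. p x y z * log 2 (W x y)) = - hW"
  proof -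
    have e: "(\<Sum>z\<in>Ys. p x y z * log 2 (W x y)) = \<pi> x * (W x y * log 2 (W x y)) * (\<Sum>z\<in>Ys. C y z)" for x y
      unfolding sum_distrib_left p_def by (simp add: mult_ac)
    have "(\<Sum>x\<in>Xs. \<Sum>y\<in>Ys. \<Sum>z\<in>Ys. p x y z * log 2 (W x y)) =
          (\<Sum>x\<in>Xs. \<pi> x * (\<Sum>y\<in>Ys. W x y * log 2 (W x y)))"
      unfolding e using C1 by (simp add: sum_distrib_left)
    also have "\<dots> = (\<Sum>x\<in>Xs. \<pi> x * (- hW))" using hW by simp
    also have "\<dots> = - hW" using pi1 by (simp add: sum_negf sum_distrib_right[symmetric])
    finally show ?thesis .
  qed
  have swapyz: "(\<Sum>x\<in>Xs. \<Sum>y\<in>Ys. \<Sum>z\<in>Ys. p x y z * f x z) = (\<Sum>x\<in>Xs. \<Sum>z\<in>Ys. \<pi> x * V x z * f x z)" for f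
  proof -
    have "(\<Sum>x\<in>Xs. \<Sum>y\<in>Ys. \<Sum>z\<in>Ys. p x y z * f x z) = (\<Sum>x\<in>Xs. \<Sum>z\<in>Ys. (\<Sum>y\<in>Ys. p x y z) * f x z)"
      by (rule sum.cong[OF refl], subst sum.swap) (simp add: sum_distrib_right)
    also have "\<dots> = (\<Sum>x\<in>Xs. \<Sum>z\<in>Ys. \<pi> x * V x z * f x z)" using pyz by simp
    finally show ?thesis .
  qed
  have B: "(\<Sum>x\<in>Xs. \<Sum>y\<in>Ys. \<Sum>z\<in>Ys. p x y z * log 2 (PZ z)) = (\<Sum>z\<in>Ys. PZ z * log 2 (PZ z))"
    unfolding swapyz by (subst sum.swap) (simp add: PZ sum_distrib_right)
  have Cc: "(\<Sum>x\<in>Xs. \<Sum>y\<in>Ys. \<Sum>z\<in>Ys. p x y z * log 2 (V x z)) = - hV"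
  proof -
    have "(\<Sum>x\<in>Xs. \<Sum>y\<in>Ys. \<Sum>z\<in>Ys. p x y z * log 2 (V x z)) = (\<Sum>x\<in>Xs. \<pi> x * (\<Sum>z\<in>Ys. V x z * log 2 (V x z)))"
      unfolding swapyz by (simp add: sum_distrib_left mult_ac)
    also have "\<dots> = (\<Sum>x\<in>Xs. \<pi> x * (- hV))" using hV by simp
    also have "\<dots> = - hV" using pi1 by (simp add: sum_negf sum_distrib_right[symmetric])
    finally show ?thesis .
  qed
  have D: "(\<Sum>x\<in>Xs. \<Sum>y\<in>Ys. \<Sum>z\<in>Ys. p x y z * log 2 (PY y)) = (\<Sum>y\<in>Ys. PY y * log 2 (PY y))"
  proof -
    have e: "(\<Sum>z\<in>Ys. p x y z * log 2 (PY y)) = \<pi> x * W x y * log 2 (PY y) * (\<Sum>z\<in>Ys. C y z)" for x y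
      unfolding sum_distrib_left p_def by (simp add: mult_ac)
    have "(\<Sum>x\<in>Xs. \<Sum>y\<in>Ys. \<Sum>z\<in>Ys. p x y z * log 2 (PY y)) = (\<Sum>x\<in>Xs. \<Sum>y\<in>Ys. \<pi> x * W x y * log 2 (PY y))"
      unfolding e using C1 by simp
    also have "\<dots> = (\<Sum>y\<in>Ys. PY y * log 2 (PY y))"
      by (subst sum.swap) (simp add: PY sum_distrib_right)
    finally show ?thesis .
  qed
  have "0 \<le> (\<Sum>x\<in>Xs. \<Sum>y\<in>Ys. \<Sum>z\<in>Ys. (p x y z - q x y z) / ln 2)"
    using sp sq by (simp add: sum_divide_distrib[symmetric] sum_subtractf)
  also have "\<dots> \<le> (\<Sum>x\<in>Xs. \<Sum>y\<in>Ys. \<Sum>z\<in>Ys.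
      p x y z * log 2 (W x y) + p x y z * log 2 (PZ z) - p x y z * log 2 (V x z) - p x y z * log 2 (PY y))"
    by (intro sum_mono tm)
  also have "\<dots> = - hW + (\<Sum>z\<in>Ys. PZ z * log 2 (PZ z)) - (- hV) - (\<Sum>y\<in>Ys. PY y * log 2 (PY y))"
    unfolding A[symmetric] B[symmetric] Cc[symmetric] D[symmetric] by (simp add: sum_subtractf sum.distrib)
  finally show ?thesis unfolding ent_def by simp
qed



lemma plogpq3:
  assumes "p > 0" "a > 0" "b > 0" "c > 0" "p / q = a / (b*c)"
  shows "p * log 2 (p / q) = p * log 2 a - p * log 2 b - p * log 2 c"
  using assms by (simp add: log_divide log_mult algebra_simps)

lemma abstract_bound:
  fixes K :: nat and enc :: "nat \<Rightarrow> 'x \<Rightarrow> real" and W V :: "'x \<Rightarrow> 'y \<Rightarrow> real"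
    and C :: "'y \<Rightarrow> 'y \<Rightarrow> real" and dec :: "'y \<Rightarrow> nat"
  assumes finX: "finite Xs" and finY: "finite Ys" and K: "K \<ge> 1"
    and enc: "\<forall>m<K. (\<forall>x\<in>Xs. enc m x \<ge> 0) \<and> (\<Sum>x\<in>Xs. enc m x) = 1"
    and W0: "\<forall>x\<in>Xs. \<forall>y\<in>Ys. 0 \<le> W x y" and W1: "\<forall>x\<in>Xs. (\<Sum>y\<in>Ys. W x y) = 1"
    and C0: "\<forall>y\<in>Ys. \<forall>z\<in>Ys. 0 \<le> C y z" and C1: "\<forall>y\<in>Ys. (\<Sum>z\<in>Ys. C y z) = 1"
    and Ccol: "\<forall>z\<in>Ys. (\<Sum>y\<in>Ys. C y z) = 1"
    and V: "\<forall>x\<in>Xs. \<forall>z\<in>Ys. V x z = (\<Sum>y\<in>Ys. W x y * C y z)"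
    and hW: "\<forall>x\<in>Xs. (\<Sum>y\<in>Ys. W x y * log 2 (W x y)) = - hW"
    and hV: "\<forall>x\<in>Xs. (\<Sum>z\<in>Ys. V x z * log 2 (V x z)) = - hV"
  shows "log 2 (real K) \<le>
     (\<Sum>m<K. \<Sum>z\<in>Ys. (1 / real K) * xlog (\<Sum>x\<in>Xs. enc m x * V x z)
          ((\<Sum>m'<K. \<Sum>x\<in>Xs. enc m' x * V x z) / real K))
     + (hV - hW) + 1
     + (\<Sum>m<K. \<Sum>x\<in>Xs. \<Sum>y\<in>Ys. (1 / real K) * enc m x * W x y * (if dec y \<noteq> m then 1 else 0)) * log 2 (real K)"
proof -
  define Ym where "Ym m y = (\<Sum>x\<in>Xs. enc m x * W x y)" for m y
  define Zm where "Zm m z = (\<Sum>x\<in>Xs. enc m x * V x z)" for m z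
  define Yb where "Yb y = (\<Sum>m<K. Ym m y) / real K" for y
  define Zb where "Zb z = (\<Sum>m<K. Zm m z) / real K" for z
  define Pe where "Pe = (\<Sum>m<K. \<Sum>x\<in>Xs. \<Sum>y\<in>Ys. (1 / real K) * enc m x * W x y * (if dec y \<noteq> m then 1 else 0))"
  define Leak where "Leak = (\<Sum>m<K. \<Sum>z\<in>Ys. (1 / real K) * xlog (Zm m z) (Zb z))"
  have Kp: "real K > 0" using K by simp
  have V0: "0 \<le> V x z" if "x \<in> Xs" "z \<in> Ys" for x z
    using V W0 C0 that by (auto intro!: sum_nonneg)
  have Ym0: "0 \<le> Ym m y" if "m < K" "y \<in> Ys" for m y
    unfolding Ym_def using enc W0 that by (auto intro!: sum_nonneg)
  have Zm0: "0 \<le> Zm m z" if "m < K" "z \<in> Ys" for m z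
    unfolding Zm_def using enc V0 that by (auto intro!: sum_nonneg)
  have Ym1: "(\<Sum>y\<in>Ys. Ym m y) = 1" if "m < K" for m
  proof -
    have "(\<Sum>y\<in>Ys. Ym m y) = (\<Sum>x\<in>Xs. enc m x * (\<Sum>y\<in>Ys. W x y))"
      unfolding Ym_def by (subst sum.swap) (simp add: sum_distrib_left)
    also have "\<dots> = 1" using W1 enc that by simp
    finally show ?thesis .
  qed
  have Yb0: "0 \<le> Yb y" if "y \<in> Ys" for y
    unfolding Yb_def using Ym0 that Kp by (auto intro!: sum_nonneg divide_nonneg_pos)
  have Yb1: "(\<Sum>y\<in>Ys. Yb y) = 1"
  proof -
    have "(\<Sum>y\<in>Ys. Yb y) = (\<Sum>m<K. \<Sum>y\<in>Ys. Ym m y) / real K"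
      unfolding Yb_def by (simp add: sum_divide_distrib[symmetric] sum.swap[where A="{..<K}" and B=Ys and g="\<lambda>m y. Ym m y"])
    also have "\<dots> = 1" using Ym1 Kp by simp
    finally show ?thesis .
  qed
  have dpi: "ent Ys (Zm m) - ent Ys (Ym m) \<le> hV - hW" if m: "m < K" for m
    by (rule ent_dpi[OF finX finY _ _ W0 W1 C0 C1 V hW hV, of "enc m"])
       (use enc m in \<open>auto simp: Ym_def Zm_def\<close>)
  have deg: "ent Ys Yb \<le> ent Ys Zb"
  proof (rule ent_degrade[OF finY _ C0 C1 Ccol])
    show "\<forall>y\<in>Ys. 0 \<le> Yb y" using Yb0 by auto
    show "\<forall>z\<in>Ys. Zb z = (\<Sum>y\<in>Ys. Yb y * C y z)"
    proof
      fix z assume z: "z \<in> Ys"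
      have "Zm m z = (\<Sum>y\<in>Ys. Ym m y * C y z)" for m
      proof -
        have "Zm m z = (\<Sum>x\<in>Xs. \<Sum>y\<in>Ys. enc m x * W x y * C y z)"
          unfolding Zm_def using V z by (simp add: sum_distrib_left mult.assoc)
        also have "\<dots> = (\<Sum>y\<in>Ys. Ym m y * C y z)"
          unfolding Ym_def by (subst sum.swap) (simp add: sum_distrib_right)
        finally show ?thesis .
      qed
      then have "(\<Sum>m<K. Zm m z) = (\<Sum>m<K. \<Sum>y\<in>Ys. Ym m y * C y z)" by simp
      also have "\<dots> = (\<Sum>y\<in>Ys. \<Sum>m<K. Ym m y * C y z)" by (rule sum.swap)
      also have "\<dots> = (\<Sum>y\<in>Ys. (\<Sum>m<K. Ym m y) * C y z)" by (simp add: sum_distrib_right)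
      finally have Z1: "(\<Sum>m<K. Zm m z) = (\<Sum>y\<in>Ys. (\<Sum>m<K. Ym m y) * C y z)" .
      have "(\<Sum>y\<in>Ys. Yb y * C y z) = (\<Sum>y\<in>Ys. (\<Sum>m<K. Ym m y) * C y z / real K)"
        by (intro sum.cong refl) (simp add: Yb_def)
      also have "\<dots> = (\<Sum>y\<in>Ys. (\<Sum>m<K. Ym m y) * C y z) / real K"
        by (rule sum_divide_distrib[symmetric])
      finally show "Zb z = (\<Sum>y\<in>Ys. Yb y * C y z)"
        unfolding Zb_def Z1 by simp
    qed
  qed
  \<comment> \<open>Fano-type bound\<close>
  define p where "p m y = Ym m y / real K" for m y
  define r where "r m y = (if dec y = m then 1/2 else 1 / (2 * real K))" for m y
  define q where "q m y = Yb y * r m y" for m y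
  have r0: "0 < r m y" for m y using Kp by (simp add: r_def)
  have sp: "(\<Sum>m<K. \<Sum>y\<in>Ys. p m y) = 1"
    unfolding p_def using Ym1 Kp by (simp add: sum_divide_distrib[symmetric])
  have sq: "(\<Sum>m<K. \<Sum>y\<in>Ys. q m y) \<le> 1"
  proof -
    have rs: "(\<Sum>m<K. r m y) \<le> 1" for y
    proof -
      have "(\<Sum>m<K. r m y) \<le> (\<Sum>m<K. (if dec y = m then 1/2 else 0) + 1 / (2 * real K))"
        by (intro sum_mono) (auto simp: r_def)
      also have "\<dots> = (\<Sum>m<K. (if dec y = m then 1/2 else 0)) + 1/2"
        using Kp by (simp add: sum.distrib)
      also have "(\<Sum>m<K. (if dec y = m then 1/2 else 0)) \<le> (1/2::real)"
        by (cases "dec y < K") (auto simp: sum.delta')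
      finally show ?thesis by simp
    qed
    have "(\<Sum>m<K. \<Sum>y\<in>Ys. q m y) = (\<Sum>y\<in>Ys. Yb y * (\<Sum>m<K. r m y))"
      unfolding q_def by (subst sum.swap) (simp add: sum_distrib_left)
    also have "\<dots> \<le> (\<Sum>y\<in>Ys. Yb y * 1)"
      by (intro sum_mono mult_left_mono rs Yb0)
    finally show ?thesis using Yb1 by simp
  qed
  have tm: "(p m y - q m y) / ln 2 \<le> p m y * log 2 (Ym m y) - p m y * log 2 (Yb y)
      + p m y + (if dec y \<noteq> m then p m y * log 2 (real K) else 0) - p m y * log 2 (real K)"
    if m: "m < K" and y: "y \<in> Ys" for m y
  proof (cases "p m y = 0")
    case True
    have "0 \<le> q m y" unfolding q_def using Yb0[OF y] r0[of m y] by simp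
    then show ?thesis using True by (simp add: divide_nonpos_pos)
  next
    case False
    have p0: "0 \<le> p m y" unfolding p_def using Ym0[OF m y] Kp by simp
    have pp: "p m y > 0" using p0 False by linarith
    have Yp: "Ym m y > 0" using pp Kp unfolding p_def by (simp add: zero_less_divide_iff)
    have "Ym m y \<le> (\<Sum>m<K. Ym m y)"
      by (rule sum_member_le) (use m Ym0 y in simp_all)
    then have "(\<Sum>m<K. Ym m y) > 0" using Yp by linarith
    then have Ybp: "Yb y > 0" unfolding Yb_def using Kp by simp
    have Krp: "real K * r m y > 0" using Kp r0[of m y] by simp
    have g: "(p m y - q m y) / ln 2 \<le> p m y * log 2 (p m y / q m y)"
      by (rule gibbs_term) (use pp Ybp r0[of m y] in \<open>auto simp: q_def\<close>)
    have pq: "p m y / q m y = Ym m y / (Yb y * (real K * r m y))"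
      using Kp Ybp r0[of m y] by (simp add: p_def q_def)
    have e1: "p m y * log 2 (p m y / q m y) = p m y * log 2 (Ym m y) - p m y * log 2 (Yb y) - p m y * log 2 (real K * r m y)"
      by (rule plogpq3[OF pp Yp Ybp Krp pq])
    have e2: "log 2 (real K * r m y) = (if dec y = m then log 2 (real K) - 1 else - 1)"
    proof -
      have h: "log 2 (1/2::real) = -1" by (simp add: log_divide)
      show ?thesis
      proof (cases "dec y = m")
        case True
        then have rr: "r m y = 1/2" by (simp add: r_def)
        have "log 2 (real K * r m y) = log 2 (real K) + log 2 (r m y)" using Kp rr by (simp add: log_mult)
        then show ?thesis using True h unfolding rr by simp
      next
        case False
        then have rr: "real K * r m y = 1 / 2" using Kp by (simp add: r_def)
        show ?thesis using False h unfolding rr by simp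
      qed
    qed
    show ?thesis
    proof (cases "dec y = m")
      case True
      then show ?thesis using g e1 e2 by (simp add: right_diff_distrib)
    next
      case False
      then show ?thesis using g e1 e2 by simp
    qed
  qed
  have fano0: "0 \<le> (\<Sum>m<K. \<Sum>y\<in>Ys. p m y * log 2 (Ym m y) - p m y * log 2 (Yb y)
      + p m y + (if dec y \<noteq> m then p m y * log 2 (real K) else 0) - p m y * log 2 (real K))"
  proof -
    have "0 \<le> (\<Sum>m<K. \<Sum>y\<in>Ys. (p m y - q m y) / ln 2)"
      using sp sq by (simp add: sum_divide_distrib[symmetric] sum_subtractf)
    also have "\<dots> \<le> (\<Sum>m<K. \<Sum>y\<in>Ys. p m y * log 2 (Ym m y) - p m y * log 2 (Yb y)
      + p m y + (if dec y \<noteq> m then p m y * log 2 (real K) else 0) - p m y * log 2 (real K))"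
      by (intro sum_mono tm) auto
    finally show ?thesis .
  qed
  have s1: "(\<Sum>m<K. \<Sum>y\<in>Ys. p m y * log 2 (Ym m y)) = - (\<Sum>m<K. ent Ys (Ym m)) / real K"
    unfolding p_def ent_def by (simp add: sum_divide_distrib[symmetric] sum_negf)
  have s2: "(\<Sum>m<K. \<Sum>y\<in>Ys. p m y * log 2 (Yb y)) = - ent Ys Yb"
    unfolding p_def ent_def Yb_def
    by (subst sum.swap) (simp add: sum_divide_distrib[symmetric] sum_distrib_right)
  have s3: "(\<Sum>m<K. \<Sum>y\<in>Ys. (if dec y \<noteq> m then p m y * log 2 (real K) else 0)) = Pe * log 2 (real K)"
  proof -
    have t: "(if dec y \<noteq> m then p m y * log 2 (real K) else 0) =
        (\<Sum>x\<in>Xs. (1 / real K) * enc m x * W x y * (if dec y \<noteq> m then 1 else 0)) * log 2 (real K)" for m y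
    proof (cases "dec y = m")
      case True then show ?thesis by simp
    next
      case False
      have "p m y = (\<Sum>x\<in>Xs. (1 / real K) * enc m x * W x y)"
        unfolding p_def Ym_def sum_divide_distrib by (simp add: mult_ac)
      then show ?thesis using False by simp
    qed
    have "(\<Sum>m<K. \<Sum>y\<in>Ys. (if dec y \<noteq> m then p m y * log 2 (real K) else 0))
       = (\<Sum>m<K. \<Sum>y\<in>Ys. \<Sum>x\<in>Xs. (1 / real K) * enc m x * W x y * (if dec y \<noteq> m then 1 else 0)) * log 2 (real K)"
      unfolding t sum_distrib_right ..
    also have "(\<Sum>m<K. \<Sum>y\<in>Ys. \<Sum>x\<in>Xs. (1 / real K) * enc m x * W x y * (if dec y \<noteq> m then 1 else 0)) = Pe"
      unfolding Pe_def by (rule sum.cong[OF refl], rule sum.swap)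
    finally show ?thesis .
  qed
  have fano: "log 2 (real K) \<le> 1 + Pe * log 2 (real K) + ent Ys Yb - (\<Sum>m<K. ent Ys (Ym m)) / real K"
  proof -
    have sl: "(\<Sum>m<K. \<Sum>y\<in>Ys. p m y * log 2 (real K)) = log 2 (real K)"
      using sp unfolding sum_distrib_right[symmetric] by simp
    have "(\<Sum>m<K. \<Sum>y\<in>Ys. p m y * log 2 (Ym m y) - p m y * log 2 (Yb y)
      + p m y + (if dec y \<noteq> m then p m y * log 2 (real K) else 0) - p m y * log 2 (real K))
      = (\<Sum>m<K. \<Sum>y\<in>Ys. p m y * log 2 (Ym m y)) - (\<Sum>m<K. \<Sum>y\<in>Ys. p m y * log 2 (Yb y))
        + (\<Sum>m<K. \<Sum>y\<in>Ys. p m y) + (\<Sum>m<K. \<Sum>y\<in>Ys. (if dec y \<noteq> m then p m y * log 2 (real K) else 0))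
        - (\<Sum>m<K. \<Sum>y\<in>Ys. p m y * log 2 (real K))"
      by (simp only: sum.distrib sum_subtractf)
    then show ?thesis using fano0 unfolding s1 s2 s3 sp sl by simp
  qed
  have leak: "Leak = ent Ys Zb - (\<Sum>m<K. ent Ys (Zm m)) / real K"
  proof -
    have e: "(1 / real K) * xlog (Zm m z) (Zb z) = (Zm m z * log 2 (Zm m z) - Zm m z * log 2 (Zb z)) / real K"
      if m: "m < K" and z: "z \<in> Ys" for m z
    proof (cases "Zm m z = 0")
      case True then show ?thesis by (simp add: xlog_def)
    next
      case False
      then have Zp: "Zm m z > 0" using Zm0[OF m z] by simp
      have "Zm m z \<le> (\<Sum>m<K. Zm m z)"
        by (rule sum_member_le) (use m Zm0 z in auto)
      then have "Zb z > 0" unfolding Zb_def using Zp Kp by simp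
      then show ?thesis using Zp by (simp add: xlog_def log_divide right_diff_distrib diff_divide_distrib)
    qed
    have "Leak = (\<Sum>m<K. \<Sum>z\<in>Ys. (Zm m z * log 2 (Zm m z) - Zm m z * log 2 (Zb z)) / real K)"
      unfolding Leak_def by (intro sum.cong refl e) auto
    also have "\<dots> = ent Ys Zb - (\<Sum>m<K. ent Ys (Zm m)) / real K"
    proof -
      have "(\<Sum>m<K. \<Sum>z\<in>Ys. Zm m z * log 2 (Zb z) / real K) = (\<Sum>z\<in>Ys. Zb z * log 2 (Zb z))"
        unfolding Zb_def by (subst sum.swap) (simp add: sum_divide_distrib[symmetric] sum_distrib_right)
      moreover have "(\<Sum>m<K. \<Sum>z\<in>Ys. Zm m z * log 2 (Zm m z) / real K) = - (\<Sum>m<K. ent Ys (Zm m)) / real K"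
        unfolding ent_def by (simp add: sum_divide_distrib sum_negf)
      moreover have "(\<Sum>m<K. \<Sum>z\<in>Ys. (Zm m z * log 2 (Zm m z) - Zm m z * log 2 (Zb z)) / real K)
         = (\<Sum>m<K. \<Sum>z\<in>Ys. Zm m z * log 2 (Zm m z) / real K) - (\<Sum>m<K. \<Sum>z\<in>Ys. Zm m z * log 2 (Zb z) / real K)"
        by (simp only: diff_divide_distrib sum_subtractf)
      ultimately show ?thesis unfolding ent_def by simp
    qed
    finally show ?thesis .
  qed
  have avg: "(\<Sum>m<K. ent Ys (Zm m)) / real K - (\<Sum>m<K. ent Ys (Ym m)) / real K \<le> hV - hW"
  proof -
    have "(\<Sum>m<K. ent Ys (Zm m) - ent Ys (Ym m)) \<le> (\<Sum>m<K. hV - hW)"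
      by (intro sum_mono dpi) auto
    then have "(\<Sum>m<K. ent Ys (Zm m)) - (\<Sum>m<K. ent Ys (Ym m)) \<le> real K * (hV - hW)"
      by (simp add: sum_subtractf)
    then have "((\<Sum>m<K. ent Ys (Zm m)) - (\<Sum>m<K. ent Ys (Ym m))) / real K \<le> hV - hW"
      using Kp by (simp add: pos_divide_le_eq mult.commute)
    then show ?thesis by (simp add: diff_divide_distrib)
  qed
  have "log 2 (real K) \<le> Leak + (hV - hW) + 1 + Pe * log 2 (real K)"
    using fano leak avg deg by linarith
  then show ?thesis unfolding Leak_def Pe_def Zm_def Zb_def .
qed



lemma bf_bsc_pbsc: "bf_bsc N pa pb st = pbsc (\<lambda>i. if st ! (i div N) then pa else pb)"
  by (intro ext) (simp add: bf_bsc_def pbsc_def Let_def)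

lemma per_state:
  fixes p1 p2 p1s p2s :: real and ss :: "(bool \<times> bool) list" and N B K :: nat
    and enc :: "nat \<Rightarrow> bool list \<Rightarrow> real" and dec :: "(bool \<times> bool) list \<Rightarrow> bool list \<Rightarrow> nat"
  assumes "0 \<le> p1" "p1 \<le> p2" "p2 \<le> p1s" "p1s \<le> p2s" "p2s \<le> 1/2"
    and code: "valid_code N B K enc"
  defines "aa \<equiv> (\<lambda>i. if map fst ss ! (i div N) then p1 else p2)"
    and "bb \<equiv> (\<lambda>i. if map snd ss ! (i div N) then p1s else p2s)"
  shows "log 2 (real K) \<le>
     (\<Sum>m<K. \<Sum>z\<in>words (N*B). (1 / real K) * xlog (eve_out p1s p2s N B enc ss m z)
          ((\<Sum>m'<K. eve_out p1s p2s N B enc ss m' z) / real K))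
     + ((\<Sum>i<N*B. Hb (bb i)) - (\<Sum>i<N*B. Hb (aa i))) + 1
     + (\<Sum>m<K. \<Sum>x\<in>words (N*B). \<Sum>y\<in>words (N*B). (1 / real K) * enc m x * bf_bsc N p1 p2 (map fst ss) x y
          * (if dec ss y \<noteq> m then 1 else 0)) * log 2 (real K)"
proof -
  define n where "n = N * B"
  define cc where "cc i = (if aa i = 1/2 then 0 else (bb i - aa i) / (1 - 2 * aa i))" for i
  have a01: "0 \<le> aa i \<and> aa i \<le> 1" for i using assms(1-5) by (auto simp: aa_def)
  have b01: "0 \<le> bb i \<and> bb i \<le> 1" for i using assms(1-5) by (auto simp: bb_def)
  have ab: "aa i \<le> bb i" "bb i \<le> 1/2" for i using assms(1-5) by (auto simp: aa_def bb_def)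
  have c01: "0 \<le> cc i \<and> cc i \<le> 1" for i
  proof (cases "aa i = 1/2")
    case True then show ?thesis by (simp add: cc_def)
  next
    case False
    then have "aa i < 1/2" using ab[of i] by linarith
    then show ?thesis using ab[of i] a01[of i] False
      by (auto simp: cc_def divide_le_eq_1 divide_nonneg_pos)
  qed
  have comp: "(\<lambda>i. aa i * (1 - cc i) + (1 - aa i) * cc i) = bb"
  proof
    fix i show "aa i * (1 - cc i) + (1 - aa i) * cc i = bb i"
    proof (cases "aa i = 1/2")
      case True then show ?thesis using ab[of i] by (simp add: cc_def)
    next
      case False
      then have "1 - 2 * aa i \<noteq> 0" by simp
      then have h: "cc i * (1 - 2 * aa i) = bb i - aa i" using False by (simp add: cc_def)
      have "aa i * (1 - cc i) + (1 - aa i) * cc i = aa i + cc i * (1 - 2 * aa i)" by (simp add: algebra_simps)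
      then show ?thesis using h by linarith
    qed
  qed
  have fin: "finite (words n)" unfolding words_eq by (rule finite_len)
  have K: "K \<ge> 1" and enc: "\<forall>m<K. (\<forall>x\<in>words n. enc m x \<ge> 0) \<and> (\<Sum>x\<in>words n. enc m x) = 1"
    using code by (auto simp: valid_code_def n_def)
  have main: "log 2 (real K) \<le>
     (\<Sum>m<K. \<Sum>z\<in>words n. (1 / real K) * xlog (\<Sum>x\<in>words n. enc m x * pbsc bb x z)
          ((\<Sum>m'<K. \<Sum>x\<in>words n. enc m' x * pbsc bb x z) / real K))
     + ((\<Sum>i<n. Hb (bb i)) - (\<Sum>i<n. Hb (aa i))) + 1
     + (\<Sum>m<K. \<Sum>x\<in>words n. \<Sum>y\<in>words n. (1 / real K) * enc m x * pbsc aa x y * (if dec ss y \<noteq> m then 1 else 0)) * log 2 (real K)"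
  proof (rule abstract_bound[OF fin fin K enc])
    show "\<forall>x\<in>words n. \<forall>y\<in>words n. 0 \<le> pbsc aa x y" using a01 by (auto intro: pbsc_nonneg)
    show "\<forall>x\<in>words n. sum (pbsc aa x) (words n) = 1" using pbsc_sum1[of _ n] unfolding words_eq by auto
    show "\<forall>y\<in>words n. \<forall>z\<in>words n. 0 \<le> pbsc cc y z" using c01 by (auto intro: pbsc_nonneg)
    show "\<forall>y\<in>words n. sum (pbsc cc y) (words n) = 1" using pbsc_sum1[of _ n] unfolding words_eq by auto
    show "\<forall>z\<in>words n. (\<Sum>y\<in>words n. pbsc cc y z) = 1"
    proof
      fix z assume z: "z \<in> words n"
      have "(\<Sum>y\<in>words n. pbsc cc y z) = (\<Sum>y\<in>words n. pbsc cc z y)"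
        by (rule sum.cong[OF refl]) (use z in \<open>auto simp: words_eq intro: pbsc_sym\<close>)
      also have "\<dots> = 1" using z pbsc_sum1[of z n] unfolding words_eq by auto
      finally show "(\<Sum>y\<in>words n. pbsc cc y z) = 1" .
    qed
    show "\<forall>x\<in>words n. \<forall>z\<in>words n. pbsc bb x z = (\<Sum>y\<in>words n. pbsc aa x y * pbsc cc y z)"
      using pbsc_comp[of _ n _ aa cc] comp unfolding words_eq by auto
    show "\<forall>x\<in>words n. (\<Sum>y\<in>words n. pbsc aa x y * log 2 (pbsc aa x y)) = - (\<Sum>i<n. Hb (aa i))"
      using pbsc_ent[of _ n aa] a01 unfolding words_eq by auto
    show "\<forall>x\<in>words n. (\<Sum>z\<in>words n. pbsc bb x z * log 2 (pbsc bb x z)) = - (\<Sum>i<n. Hb (bb i))"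
      using pbsc_ent[of _ n bb] b01 unfolding words_eq by auto
  qed
  have W: "bf_bsc N p1 p2 (map fst ss) = pbsc aa" unfolding bf_bsc_pbsc aa_def ..
  have V: "bf_bsc N p1s p2s (map snd ss) = pbsc bb" unfolding bf_bsc_pbsc bb_def ..
  show ?thesis using main unfolding eve_out_def W V n_def .
qed



definition wq :: "real \<Rightarrow> real \<Rightarrow> bool \<times> bool \<Rightarrow> real" where
  "wq q1 q1s c = (if fst c then q1 else 1 - q1) * (if snd c then q1s else 1 - q1s)"

lemma sp_Cons: "state_prob q1 q1s (c#ss) = wq q1 q1s c * state_prob q1 q1s ss"
  unfolding state_prob_def wq_def
  by (simp only: length_Cons prod.lessThan_Suc_shift nth_Cons_0 nth_Cons_Suc)

lemma UNIV_pair: "(UNIV :: (bool \<times> bool) set) = {(True,True),(True,False),(False,True),(False,False)}"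
  by auto

lemma sum_UNIV_pair: fixes f :: "bool \<times> bool \<Rightarrow> real" shows "(\<Sum>c\<in>(UNIV :: (bool \<times> bool) set). f c) = f (True,True) + f (True,False) + f (False,True) + f (False,False)"
  unfolding UNIV_pair by (simp add: add.assoc)

lemma wq_sum: "(\<Sum>c\<in>UNIV. wq q1 q1s c) = 1"
  unfolding sum_UNIV_pair wq_def by (simp add: algebra_simps)

lemma sp_nonneg: "0 \<le> q1 \<Longrightarrow> q1 \<le> 1 \<Longrightarrow> 0 \<le> q1s \<Longrightarrow> q1s \<le> 1 \<Longrightarrow> 0 \<le> state_prob q1 q1s ss"
  unfolding state_prob_def by (intro prod_nonneg) auto

lemma states_eq: "states B = {ss. length ss = B}" by (simp add: states_def)

lemma sp_sum: "(\<Sum>ss\<in>states B. state_prob q1 q1s ss) = 1"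
proof (induction B)
  case 0 then show ?case by (simp add: states_eq state_prob_def)
next
  case (Suc B)
  have "(\<Sum>ss\<in>states (Suc B). state_prob q1 q1s ss) = (\<Sum>c\<in>UNIV. wq q1 q1s c * (\<Sum>ss\<in>states B. state_prob q1 q1s ss))"
    unfolding states_eq sum_len_Suc sp_Cons by (simp add: sum_distrib_left)
  then show ?case using Suc wq_sum by simp
qed

lemma sp_marg: "k < B \<Longrightarrow> (\<Sum>ss\<in>states B. state_prob q1 q1s ss * g (ss ! k)) = (\<Sum>c\<in>UNIV. wq q1 q1s c * g c)"
proof (induction B arbitrary: k)
  case 0 then show ?case by simp
next
  case (Suc B)
  show ?case
  proof (cases k)
    case 0
    have "(\<Sum>ss\<in>states (Suc B). state_prob q1 q1s ss * g (ss ! k)) =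
        (\<Sum>c\<in>UNIV. wq q1 q1s c * g c * (\<Sum>ss\<in>states B. state_prob q1 q1s ss))"
      unfolding states_eq sum_len_Suc sp_Cons 0 by (simp add: sum_distrib_left mult_ac)
    then show ?thesis using sp_sum by simp
  next
    case (Suc k')
    then have k': "k' < B" using Suc.prems by simp
    have "(\<Sum>ss\<in>states (Suc B). state_prob q1 q1s ss * g (ss ! k)) =
        (\<Sum>c\<in>UNIV. wq q1 q1s c * (\<Sum>ss\<in>states B. state_prob q1 q1s ss * g (ss ! k')))"
      unfolding states_eq sum_len_Suc sp_Cons Suc by (simp add: sum_distrib_left mult_ac)
    then show ?thesis using Suc.IH[OF k'] wq_sum by (simp add: sum_distrib_right[symmetric])
  qed
qed

lemma sp_avg:
  "(\<Sum>ss\<in>states B. state_prob q1 q1s ss * (\<Sum>i<N*B. h (ss ! (i div N)))) = real (N*B) * (\<Sum>c\<in>UNIV. wq q1 q1s c * h c)"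
proof -
  have "(\<Sum>ss\<in>states B. state_prob q1 q1s ss * (\<Sum>i<N*B. h (ss ! (i div N)))) =
        (\<Sum>i<N*B. \<Sum>ss\<in>states B. state_prob q1 q1s ss * h (ss ! (i div N)))"
    by (simp add: sum_distrib_left) (rule sum.swap)
  also have "\<dots> = (\<Sum>i<N*B. (\<Sum>c\<in>UNIV. wq q1 q1s c * h c))"
  proof (rule sum.cong[OF refl])
    fix i assume "i \<in> {..<N*B}"
    then have "i div N < B" by (simp add: less_mult_imp_div_less mult.commute)
    then show "(\<Sum>ss\<in>states B. state_prob q1 q1s ss * h (ss ! (i div N))) = (\<Sum>c\<in>UNIV. wq q1 q1s c * h c)"
      by (rule sp_marg)
  qed
  finally show ?thesis by simp
qed

lemma per_code:
  fixes q1 q1s p1 p2 p1s p2s :: real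
  assumes q: "0 \<le> q1" "q1 \<le> 1" "0 \<le> q1s" "q1s \<le> 1"
    and p: "0 \<le> p1" "p1 \<le> p2" "p2 \<le> p1s" "p1s \<le> p2s" "p2s \<le> 1/2"
    and code: "valid_code N B K enc"
  shows "log 2 (real K) \<le> leakage q1 q1s p1s p2s N B K enc
     + real (N*B) * (q1s * Hb p1s + (1 - q1s) * Hb p2s - q1 * Hb p1 - (1 - q1) * Hb p2) + 1
     + err_prob q1 q1s p1 p2 N B K enc dec * log 2 (real K)"
proof -
  define sp where "sp ss = state_prob q1 q1s ss" for ss
  define L where "L ss = (\<Sum>m<K. \<Sum>z\<in>words (N*B). (1 / real K) * xlog (eve_out p1s p2s N B enc ss m z)
          ((\<Sum>m'<K. eve_out p1s p2s N B enc ss m' z) / real K))" for ss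
  define h where "h c = Hb (if snd c then p1s else p2s) - Hb (if fst c then p1 else p2)" for c :: "bool \<times> bool"
  define P where "P ss = (\<Sum>m<K. \<Sum>x\<in>words (N*B). \<Sum>y\<in>words (N*B). (1 / real K) * enc m x * bf_bsc N p1 p2 (map fst ss) x y
          * (if dec ss y \<noteq> m then 1 else 0))" for ss
  have one: "log 2 (real K) \<le> L ss + (\<Sum>i<N*B. h (ss ! (i div N))) + 1 + P ss * log 2 (real K)"
    if ss: "ss \<in> states B" for ss
  proof -
    have D: "(\<Sum>i<N*B. Hb (if map snd ss ! (i div N) then p1s else p2s)) - (\<Sum>i<N*B. Hb (if map fst ss ! (i div N) then p1 else p2))
        = (\<Sum>i<N*B. h (ss ! (i div N)))"
    proof -
      have "(\<Sum>i<N*B. Hb (if map snd ss ! (i div N) then p1s else p2s)) - (\<Sum>i<N*B. Hb (if map fst ss ! (i div N) then p1 else p2))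
          = (\<Sum>i<N*B. Hb (if map snd ss ! (i div N) then p1s else p2s) - Hb (if map fst ss ! (i div N) then p1 else p2))"
        by (simp add: sum_subtractf)
      also have "\<dots> = (\<Sum>i<N*B. h (ss ! (i div N)))"
      proof (rule sum.cong[OF refl])
        fix i assume "i \<in> {..<N*B}"
        then have "i div N < length ss" using ss by (simp add: states_eq less_mult_imp_div_less mult.commute)
        then show "Hb (if map snd ss ! (i div N) then p1s else p2s) - Hb (if map fst ss ! (i div N) then p1 else p2) = h (ss ! (i div N))"
          by (simp add: h_def)
      qed
      finally show ?thesis .
    qed
    show ?thesis using per_state[OF p code, of ss dec] unfolding D L_def P_def .
  qed
  have sp0: "0 \<le> sp ss" for ss unfolding sp_def by (rule sp_nonneg[OF q])
  have "log 2 (real K) = (\<Sum>ss\<in>states B. sp ss * log 2 (real K))"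
    using sp_sum unfolding sp_def by (simp add: sum_distrib_right[symmetric])
  also have "\<dots> \<le> (\<Sum>ss\<in>states B. sp ss * (L ss + (\<Sum>i<N*B. h (ss ! (i div N))) + 1 + P ss * log 2 (real K)))"
    by (intro sum_mono mult_left_mono one sp0)
  also have "\<dots> = (\<Sum>ss\<in>states B. sp ss * L ss) + (\<Sum>ss\<in>states B. sp ss * (\<Sum>i<N*B. h (ss ! (i div N))))
       + (\<Sum>ss\<in>states B. sp ss) + (\<Sum>ss\<in>states B. sp ss * P ss) * log 2 (real K)"
    by (simp add: distrib_left sum.distrib sum_distrib_right mult.assoc)
  also have "(\<Sum>ss\<in>states B. sp ss * L ss) = leakage q1 q1s p1s p2s N B K enc"
    unfolding leakage_def sp_def L_def ..
  also have "(\<Sum>ss\<in>states B. sp ss * (\<Sum>i<N*B. h (ss ! (i div N)))) =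
      real (N*B) * (q1s * Hb p1s + (1 - q1s) * Hb p2s - q1 * Hb p1 - (1 - q1) * Hb p2)"
    unfolding sp_def sp_avg by (simp add: sum_UNIV_pair wq_def h_def algebra_simps)
  also have "(\<Sum>ss\<in>states B. sp ss) = 1" unfolding sp_def by (rule sp_sum)
  also have "(\<Sum>ss\<in>states B. sp ss * P ss) = err_prob q1 q1s p1 p2 N B K enc dec"
  proof -
    have "(\<Sum>ss\<in>states B. sp ss * P ss) = (\<Sum>ss\<in>states B. \<Sum>m<K. \<Sum>x\<in>words (N*B). \<Sum>y\<in>words (N*B).
        (1 / real K) * state_prob q1 q1s ss * enc m x * bf_bsc N p1 p2 (map fst ss) x y * (if dec ss y \<noteq> m then 1 else 0))"
      unfolding sp_def P_def sum_distrib_left by (simp add: mult_ac)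
    also have "\<dots> = err_prob q1 q1s p1 p2 N B K enc dec"
      unfolding err_prob_def by (rule sum.swap)
    finally show ?thesis .
  qed
  finally show ?thesis .
qed



theorem lemma2:
  fixes q1 q1s p1 p2 p1s p2s :: real
  assumes "0 \<le> q1" "q1 \<le> 1" "0 \<le> q1s" "q1s \<le> 1"
    and "0 \<le> p1" "p1 \<le> p2" "p2 \<le> p1s" "p1s \<le> p2s" "p2s \<le> 1/2"
  shows "secrecy_capacity_CSI_D q1 q1s p1 p2 p1s p2s
           \<le> ereal (q1s * Hb p1s + (1 - q1s) * Hb p2s - q1 * Hb p1 - (1 - q1) * Hb p2)"
proof -
  define bd where "bd = q1s * Hb p1s + (1 - q1s) * Hb p2s - q1 * Hb p1 - (1 - q1) * Hb p2"
  have ach: "R \<le> bd" if A: "achievable_CSI_D q1 q1s p1 p2 p1s p2s R" for R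
  proof (rule ccontr)
    assume "\<not> R \<le> bd"
    then have d: "R - bd > 0" by simp
    define d where "d = R - bd"
    have dp: "d > 0" using d by (simp add: d_def)
    obtain N B K enc dec where
      Nl: "filterlim N at_top sequentially" and Bl: "filterlim B at_top sequentially"
      and codes: "\<forall>n. valid_code (N n) (B n) (K n) (enc n)"
      and rate: "\<forall>\<epsilon>>0. eventually (\<lambda>n. log 2 (real (K n)) / real (N n * B n) \<ge> R - \<epsilon>) sequentially"
      and err: "(\<lambda>n. err_prob q1 q1s p1 p2 (N n) (B n) (K n) (enc n) (dec n)) \<longlonglongrightarrow> 0"
      and lk: "(\<lambda>n. leakage q1 q1s p1s p2s (N n) (B n) (K n) (enc n) / real (N n * B n)) \<longlonglongrightarrow> 0"
      using A unfolding achievable_CSI_D_def by blast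
    define \<eta> where "\<eta> = min (1/2) (d / (8 * (\<bar>bd\<bar> + d + 1)))"
    have etap: "\<eta> > 0" using dp by (simp add: \<eta>_def)
    have eta2: "\<eta> \<le> 1/2" unfolding \<eta>_def by (rule min.cobounded1)
    have eta3: "(\<bar>bd\<bar> + d + 1) * \<eta> \<le> d / 8"
    proof -
      have pos: "\<bar>bd\<bar> + d + 1 > 0" using dp by simp
      have "\<eta> \<le> d / (8 * (\<bar>bd\<bar> + d + 1))" unfolding \<eta>_def by (rule min.cobounded2)
      then have "(\<bar>bd\<bar> + d + 1) * \<eta> \<le> (\<bar>bd\<bar> + d + 1) * (d / (8 * (\<bar>bd\<bar> + d + 1)))"
        using pos by (intro mult_left_mono) auto
      also have "\<dots> = d / 8" using pos by (simp add: field_simps)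
      finally show ?thesis .
    qed
    have e1: "eventually (\<lambda>n. log 2 (real (K n)) / real (N n * B n) \<ge> R - d/2) sequentially"
      using rate dp by simp
    have e2: "eventually (\<lambda>n. err_prob q1 q1s p1 p2 (N n) (B n) (K n) (enc n) (dec n) < \<eta>) sequentially"
      by (rule order_tendstoD(2)[OF err etap])
    have e3: "eventually (\<lambda>n. leakage q1 q1s p1s p2s (N n) (B n) (K n) (enc n) / real (N n * B n) < d/8) sequentially"
      by (rule order_tendstoD(2)[OF lk]) (use dp in simp)
    have e4: "eventually (\<lambda>n. nat \<lceil>8/d\<rceil> + 1 \<le> N n) sequentially"
      using Nl unfolding filterlim_at_top by blast
    have e5: "eventually (\<lambda>n. 1 \<le> B n) sequentially"
      using Bl unfolding filterlim_at_top by blast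
    have "eventually (\<lambda>n. (log 2 (real (K n)) / real (N n * B n) \<ge> R - d/2) \<and>
        err_prob q1 q1s p1 p2 (N n) (B n) (K n) (enc n) (dec n) < \<eta> \<and>
        leakage q1 q1s p1s p2s (N n) (B n) (K n) (enc n) / real (N n * B n) < d/8 \<and>
        nat \<lceil>8/d\<rceil> + 1 \<le> N n \<and> 1 \<le> B n) sequentially"
      using e1 e2 e3 e4 e5 by eventually_elim auto
    then obtain n where
      h1: "log 2 (real (K n)) / real (N n * B n) \<ge> R - d/2" and
      h2: "err_prob q1 q1s p1 p2 (N n) (B n) (K n) (enc n) (dec n) < \<eta>" and
      h3: "leakage q1 q1s p1s p2s (N n) (B n) (K n) (enc n) / real (N n * B n) < d/8" and
      h4: "nat \<lceil>8/d\<rceil> + 1 \<le> N n" and h5: "1 \<le> B n"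
      unfolding eventually_sequentially by blast
    define M where "M = real (N n * B n)"
    define lK where "lK = log 2 (real (K n))"
    define e where "e = err_prob q1 q1s p1 p2 (N n) (B n) (K n) (enc n) (dec n)"
    define L where "L = leakage q1 q1s p1s p2s (N n) (B n) (K n) (enc n)"
    have Kn: "K n \<ge> 1" using codes by (simp add: valid_code_def)
    have lK0: "lK \<ge> 0" using Kn by (simp add: lK_def)
    have "N n * 1 \<le> N n * B n" using h5 by (rule mult_le_mono2)
    then have NM: "real (N n) \<le> M" unfolding M_def by linarith
    have "8/d \<le> real (nat \<lceil>8/d\<rceil>)" by linarith
    then have M8: "8/d \<le> M" using h4 NM by linarith
    have Mp: "M > 0" using M8 dp by (smt (verit) divide_pos_pos)
    have invM: "1/M \<le> d/8"
    proof -
      have "0 < 8/d * M" using dp Mp by simp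
      then have "1/M \<le> 1/(8/d)" using M8 by (intro divide_left_mono) (auto simp: mult.commute)
      then show ?thesis by simp
    qed
    have pc: "lK \<le> L + M * bd + 1 + e * lK"
      using per_code[OF assms codes[rule_format, of n], of "dec n"]
      unfolding lK_def L_def M_def e_def bd_def .
    define r where "r = lK / M"
    have r0: "r \<ge> 0" using lK0 Mp by (simp add: r_def)
    have pcr: "r \<le> L / M + bd + 1/M + e * r"
    proof -
      have "lK / M \<le> (L + M * bd + 1 + e * lK) / M" using pc Mp by (intro divide_right_mono) auto
      then show ?thesis using Mp by (simp add: r_def add_divide_distrib)
    qed
    have "R - d/2 = bd + d/2" by (simp add: d_def field_simps)
    then have rR: "r \<ge> bd + d/2" using h1 unfolding r_def lK_def M_def by simp
    have eh: "e < \<eta>" using h2 by (simp add: e_def)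
    have Lh: "L / M < d/8" using h3 by (simp add: L_def M_def)
    have a1: "r * e \<le> r * \<eta>" using r0 eh by (intro mult_left_mono) auto
    have a2: "(bd + d/2) * (1 - \<eta>) \<le> r * (1 - \<eta>)" using rR eta2 by (intro mult_right_mono) auto
    have a3: "(bd + d/2) * \<eta> \<le> (\<bar>bd\<bar> + d + 1) * \<eta>" using etap dp by (intro mult_right_mono) auto
    have re: "r * (1 - e) = r - e * r" by (simp add: algebra_simps)
    have "r * (1 - e) < bd + d/4" using pcr Lh invM re by linarith
    moreover have "r * (1 - e) \<ge> bd + d/2 - d/8"
    proof -
      have x1: "r * (1 - \<eta>) = r - r * \<eta>" "(bd + d/2) * (1 - \<eta>) = (bd + d/2) - (bd + d/2) * \<eta>"
        by (simp_all add: algebra_simps add_divide_distrib diff_divide_distrib)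
      have x2: "(\<bar>bd\<bar> + d + 1) * \<eta> \<ge> 0" using etap dp by simp
      have x3: "e * r = r * e" by (rule mult.commute)
      show ?thesis using a1 a2 a3 eta3 x1 re x3 by linarith
    qed
    ultimately show False using dp by linarith
  qed
  show ?thesis unfolding secrecy_capacity_CSI_D_def bd_def[symmetric]
    by (rule SUP_least) (use ach in auto)
qed


end
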